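(* Let $p$ be a prime and $d>1$. Let $h^{\mathrm u}_{p,d}$ (resp. $h^{\mathrm l}_{p,d}$) be the number of unitary equivalence classes of frames $\Phi_J$ with $J\subset\mathbb{Z}_p$ a $d$-element subset with $0\notin J$ (resp. $0\in J$). Then $$h^{\mathrm u}_{p,d}=\frac{1}{p-1}\sum_{j\mid\gcd(p-1,d)}\binom{(p-1)/j}{d/j}\varphi(j),\qquad h^{\mathrm l}_{p,d}=\frac{1}{p-1}\sum_{j\mid\gcd(p-1,d-1)}\binom{(p-1)/j}{(d-1)/j}\varphi(j),$$ where $\varphi$ is Euler's totient function. (The formula for $h^{\mathrm u}_{p,d}$ also holds for $d=1$.)
   Context: Let $\omega=e^{2\pi i/p}$. For a $d$-element subset $J\subset\mathbb{Z}_p$, the cyclic harmonic frame $\Phi_J$ is the sequence $(v_k)_{k\in\mathbb{Z}_p}$ with $v_k=(\omega^{jk})_{j\in J}\in\mathbb{C}^J\cong\mathbb{C}^d$. Two finite sequences $(v_k)_{k\in I}$, $(w_k)_{k\in I'}$ in $\mathbb{C}^d$ are unitarily equivalent if there is a unitary $U$ and a bijection $\sigma:I\to I'$ with $v_k=Uw_{\sigma(k)}$ for all $k$. Frames $\Phi_J$ with $0\in J$ are called lifted, those with $0\notin J$ unlifted. *)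

theory Defs
  imports Complex_Main "HOL-Number_Theory.Number_Theory"
begin

text \<open>Z_p is represented by {0..<p}; omega = exp(2 pi i / p).\<close>
definition omega :: "nat \<Rightarrow> complex" where
  "omega p = cis (2 * pi / real p)"

text \<open>Cyclic harmonic frame Phi_J: the vector v_k (k in Z_p) lives in C^J, which is
  identified with C^d (d = card J) via the increasing enumeration of J; a vector of C^d
  is a function nat => complex whose entries i < d are the coordinates.\<close>
definition harm_frame :: "nat \<Rightarrow> nat set \<Rightarrow> nat \<Rightarrow> nat \<Rightarrow> complex" where
  "harm_frame p J k i = omega p ^ (sorted_list_of_set J ! i * k)"

definition unitary_mat :: "nat \<Rightarrow> (nat \<Rightarrow> nat \<Rightarrow> complex) \<Rightarrow> bool" where
  "unitary_mat d U \<longleftrightarrow>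
     (\<forall>i<d. \<forall>l<d. (\<Sum>m<d. cnj (U m i) * U m l) = (if i = l then 1 else 0))"

definition unit_equiv ::
  "nat \<Rightarrow> nat set \<Rightarrow> (nat \<Rightarrow> nat \<Rightarrow> complex) \<Rightarrow> nat set \<Rightarrow> (nat \<Rightarrow> nat \<Rightarrow> complex) \<Rightarrow> bool" where
  "unit_equiv d I v I' w \<longleftrightarrow>
     (\<exists>U \<sigma>. unitary_mat d U \<and> bij_betw \<sigma> I I' \<and>
        (\<forall>k\<in>I. \<forall>i<d. v k i = (\<Sum>l<d. U i l * w (\<sigma> k) l)))"

definition num_classes :: "nat \<Rightarrow> nat \<Rightarrow> nat set set \<Rightarrow> nat" where
  "num_classes p d S = card (S // {(J, K). J \<in> S \<and> K \<in> S \<and>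
      unit_equiv d {..<p} (harm_frame p J) {..<p} (harm_frame p K)})"

definition unlifted_sets :: "nat \<Rightarrow> nat \<Rightarrow> nat set set" where
  "unlifted_sets p d = {J. J \<subseteq> {..<p} \<and> card J = d \<and> 0 \<notin> J}"

definition lifted_sets :: "nat \<Rightarrow> nat \<Rightarrow> nat set set" where
  "lifted_sets p d = {J. J \<subseteq> {..<p} \<and> card J = d \<and> 0 \<in> J}"

end

theory Submission
  imports Defs "HOL-Computational_Algebra.Polynomial" "HOL-Algebra.Group_Action"
    "HOL-Number_Theory.Residue_Primitive_Roots"
begin
abbreviation ci :: "int poly \<Rightarrow> complex poly" where "ci \<equiv> map_poly of_int"

lemma ci_mult: "ci (a * b) = ci a * ci b"
  by (simp add: poly_eq_iff coeff_mult coeff_map_poly)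
lemma ci_add: "ci (a + b) = ci a + ci b"
  by (simp add: poly_eq_iff coeff_map_poly)
lemma ci_smult: "ci (smult c a) = smult (of_int c) (ci a)"
  by (simp add: poly_eq_iff coeff_map_poly)
lemma ci_const: "ci [:c:] = [:of_int c:]"
  by (simp add: poly_eq_iff coeff_map_poly coeff_pCons split: nat.split)

lemma poly_ci_pcompose: "poly (ci (pcompose Q r)) z = poly (ci Q) (poly (ci r) z)"
proof (induction Q)
  case 0 then show ?case by simp
next
  case (pCons a Q)
  have "ci (pCons a Q) = pCons (of_int a) (ci Q)"
    by (simp add: poly_eq_iff coeff_map_poly coeff_pCons split: nat.split)
  then show ?case using pCons by (simp add: pcompose_pCons ci_add ci_mult ci_const)
qed

lemma eis1:
  fixes F G H :: "int poly" and q :: int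
  assumes "H = F * G" "prime q" "q dvd coeff F 0" "\<not> q dvd coeff G 0"
    "\<not> q dvd lead_coeff F" "\<forall>k<degree H. q dvd coeff H k"
  shows "degree H \<le> degree F"
proof -
  define r where "r = (LEAST i. \<not> q dvd coeff F i)"
  have r1: "\<not> q dvd coeff F r" unfolding r_def by (rule LeastI[of _ "degree F"]) (use assms in auto)
  have r2: "q dvd coeff F i" if "i < r" for i using not_less_Least[OF that[unfolded r_def]] by auto
  have r3: "r \<le> degree F" unfolding r_def by (rule Least_le) (use assms in auto)
  have "coeff H r = (\<Sum>i\<le>r. coeff F i * coeff G (r-i))" using assms(1) by (simp add: coeff_mult)
  also have "\<dots> = (\<Sum>i<r. coeff F i * coeff G (r-i)) + coeff F r * coeff G 0"
    by (simp add: lessThan_Suc_atMost[symmetric])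
  finally have eq: "coeff H r = (\<Sum>i<r. coeff F i * coeff G (r-i)) + coeff F r * coeff G 0" .
  have d1: "q dvd (\<Sum>i<r. coeff F i * coeff G (r-i))"
    by (intro dvd_sum) (auto intro: r2 dvd_mult2)
  show ?thesis
  proof (rule ccontr)
    assume "\<not> ?thesis"
    then have "r < degree H" using r3 by simp
    then have "q dvd coeff H r" using assms(6) by auto
    then have "q dvd coeff F r * coeff G 0" using eq d1 by (metis dvd_add_right_iff)
    then show False using r1 assms(2,4) by (meson prime_dvd_mult_iff)
  qed
qed

lemma eis:
  fixes F G H :: "int poly" and q :: int
  assumes "H = F * G" "prime q" "coeff H 0 = q" "\<forall>k<degree H. q dvd coeff H k" "lead_coeff H = 1"
  shows "degree F = 0 \<or> degree G = 0"
proof -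
  have H0: "H \<noteq> 0" using assms(3) assms(2) by (metis coeff_0 not_prime_0)
  have F0: "F \<noteq> 0" and G0: "G \<noteq> 0" using H0 assms(1) by auto
  have dH: "degree H = degree F + degree G" using assms(1) F0 G0 by (simp add: degree_mult_eq)
  have c0: "coeff F 0 * coeff G 0 = q" using assms(1,3) by (simp add: coeff_mult_0)
  have l: "lead_coeff F * lead_coeff G = 1" using assms(1,5) by (simp add: lead_coeff_mult)
  have nq1: "\<not> q dvd 1" using assms(2) not_prime_unit by blast
  have q0: "q \<noteq> 0" using assms(2) not_prime_0 by blast
  have nF: "\<not> q dvd lead_coeff F"
  proof
    assume "q dvd lead_coeff F" then have "q dvd lead_coeff F * lead_coeff G" by (rule dvd_mult2)
    then show False using l nq1 by simp
  qed
  have nG: "\<not> q dvd lead_coeff G"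
  proof
    assume "q dvd lead_coeff G" then have "q dvd lead_coeff F * lead_coeff G" by (rule dvd_mult)
    then show False using l nq1 by simp
  qed
  have "q dvd coeff F 0 * coeff G 0" using c0 by simp
  then have or: "q dvd coeff F 0 \<or> q dvd coeff G 0" using assms(2) by (simp add: prime_dvd_mult_iff)
  have nboth: "\<not> (q dvd coeff F 0 \<and> q dvd coeff G 0)"
  proof
    assume "q dvd coeff F 0 \<and> q dvd coeff G 0"
    then have "q * q dvd coeff F 0 * coeff G 0" by (simp add: mult_dvd_mono)
    then have "q * q dvd q * 1" using c0 by simp
    then have "q dvd 1" using q0 by (simp only: dvd_mult_cancel_left) simp
    then show False using nq1 by simp
  qed
  show ?thesis
  proof (cases "q dvd coeff F 0")
    case True
    then have "\<not> q dvd coeff G 0" using nboth by blast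
    then have "degree H \<le> degree F"
      using eis1[OF assms(1,2) True] nF assms(4) by blast
    then show ?thesis using dH by simp
  next
    case False
    then have "q dvd coeff G 0" using or by blast
    have H': "H = G * F" using assms(1) by (simp add: mult.commute)
    have "degree H \<le> degree G"
      using eis1[OF H' assms(2) \<open>q dvd coeff G 0\<close> False nG] assms(4) by blast
    then show ?thesis using dH by simp
  qed
qed

definition Ep :: "nat \<Rightarrow> int poly" where "Ep p = (\<Sum>k<p. monom (int (p choose Suc k)) k)"

lemma coeff_Ep: "coeff (Ep p) k = (if k < p then int (p choose Suc k) else 0)"
  by (simp add: Ep_def coeff_sum coeff_monom)

lemma degree_Ep: assumes "p \<ge> 1" shows "degree (Ep p) = p - 1"
proof (rule antisym)
  show "degree (Ep p) \<le> p - 1" by (rule degree_le) (auto simp: coeff_Ep)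
  show "p - 1 \<le> degree (Ep p)" by (rule le_degree) (use assms in \<open>auto simp: coeff_Ep\<close>)
qed

lemma Ep_root:
  fixes z :: complex
  assumes "p \<ge> 1" "z ^ p = 1" "z \<noteq> 1"
  shows "poly (ci (Ep p)) (z - 1) = 0"
proof -
  obtain n where n: "p = Suc n" using assms(1) by (cases p) auto
  define x where "x = z - 1"
  have x0: "x \<noteq> 0" using assms x_def by auto
  have "poly (ci (Ep p)) x = (\<Sum>i\<le>degree (ci (Ep p)). coeff (ci (Ep p)) i * x ^ i)"
    by (rule poly_altdef)
  also have "\<dots> = (\<Sum>i\<le>n. of_nat (p choose Suc i) * x ^ i)"
    using assms(1) n by (simp add: degree_map_poly degree_Ep coeff_map_poly coeff_Ep)
  finally have e: "poly (ci (Ep p)) x = (\<Sum>i\<le>n. of_nat (p choose Suc i) * x ^ i)" .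
  have "(x + 1) ^ p = (\<Sum>k\<le>p. of_nat (p choose k) * x ^ k)"
    by (simp add: binomial_ring)
  also have "\<dots> = 1 + (\<Sum>i\<le>n. of_nat (p choose Suc i) * x ^ Suc i)"
    unfolding n by (subst sum.atMost_Suc_shift) simp
  also have "\<dots> = 1 + x * poly (ci (Ep p)) x"
    by (simp add: e sum_distrib_left mult_ac)
  finally have "x * poly (ci (Ep p)) x = 0" using assms(2) x_def by simp
  then show ?thesis using x0 x_def by simp
qed

lemma no_small_root:
  fixes z :: complex and R :: "int poly"
  assumes p: "prime p" and z: "z ^ p = 1" "z \<noteq> 1" and R: "R \<noteq> 0" "degree R < p - 1"
  shows "poly (ci R) (z - 1) \<noteq> 0"
proof
  assume root: "poly (ci R) (z - 1) = 0"
  define P where "P n \<longleftrightarrow> (\<exists>R. R \<noteq> 0 \<and> degree R = n \<and> poly (ci R) (z - 1) = 0)" for n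
  have "P (degree R)" using R root P_def by auto
  define n0 where "n0 = (LEAST n. P n)"
  have Pn0: "P n0" unfolding n0_def by (rule LeastI) fact
  have n0le: "n0 \<le> degree R" unfolding n0_def by (rule Least_le) fact
  obtain R0 where R0: "R0 \<noteq> 0" "degree R0 = n0" "poly (ci R0) (z - 1) = 0" using Pn0 P_def by auto
  have p1: "p \<ge> 1" using p prime_gt_0_nat by (simp add: Suc_le_eq)
  obtain q r where qr: "pseudo_divmod (Ep p) R0 = (q, r)" by (metis surj_pair)
  define c where "c = lead_coeff R0 ^ (Suc (degree (Ep p)) - degree R0)"
  have "lead_coeff R0 \<noteq> 0" using R0(1) by simp
  then have c0: "c \<noteq> 0" unfolding c_def by (rule power_not_zero)
  have eq: "smult c (Ep p) = R0 * q + r" using pseudo_divmod(1)[OF R0(1) qr] c_def by simp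
  have rdeg: "r = 0 \<or> degree r < degree R0" using pseudo_divmod(2)[OF R0(1) qr] .
  have "poly (ci r) (z - 1) = 0"
  proof -
    have "ci (smult c (Ep p)) = ci (R0 * q) + ci r" using eq by (simp add: ci_add)
    then have "poly (ci r) (z - 1) = poly (ci (smult c (Ep p))) (z - 1) - poly (ci (R0 * q)) (z-1)"
      by simp
    also have "\<dots> = 0" using Ep_root[OF p1 z] R0(3) by (simp add: ci_smult ci_mult)
    finally show ?thesis .
  qed
  have r0: "r = 0"
  proof (rule ccontr)
    assume "r \<noteq> 0"
    then have "P (degree r)" using \<open>poly (ci r) (z - 1) = 0\<close> P_def by auto
    then have "n0 \<le> degree r" unfolding n0_def by (rule Least_le)
    then show False using rdeg \<open>r \<noteq> 0\<close> R0(2) by simp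
  qed
  have cE: "content (Ep p) = 1"
  proof -
    have "content (Ep p) dvd coeff (Ep p) (p - 1)" by (rule content_dvd_coeff)
    then have "content (Ep p) dvd 1" using p1 by (simp add: coeff_Ep)
    moreover have "content (Ep p) \<ge> 0" by (metis normalize_content abs_ge_zero normalize_int_def)
    ultimately show ?thesis by (simp add: zdvd1_eq)
  qed
  have ppE: "primitive_part (Ep p) = Ep p"
    using content_times_primitive_part[of "Ep p"] cE by simp
  have "smult (sgn c) (Ep p) = primitive_part R0 * primitive_part q"
    using arg_cong[OF eq[unfolded r0], of primitive_part]
    by (simp add: primitive_part_smult primitive_part_mult ppE unit_factor_int_def)
  then have "smult (sgn c) (smult (sgn c) (Ep p)) = smult (sgn c) (primitive_part R0) * primitive_part q"
    by simp
  then have E: "Ep p = smult (sgn c) (primitive_part R0) * primitive_part q"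
    using c0 by (simp add: sgn_mult[symmetric])
  have dF: "degree (smult (sgn c) (primitive_part R0)) = n0" using c0 R0 by (simp add: sgn_0_0)
  have "degree (smult (sgn c) (primitive_part R0)) = 0 \<or> degree (primitive_part q) = 0"
  proof (rule eis[OF E])
    show "prime (int p)" using p by (simp add: prime_nat_int_transfer)
    show "coeff (Ep p) 0 = int p" by (simp add: coeff_Ep p1)
    show "\<forall>k<degree (Ep p). int p dvd coeff (Ep p) k"
      using p p1 by (auto simp: degree_Ep coeff_Ep intro!: dvd_choose_prime)
    show "lead_coeff (Ep p) = 1" using p1 by (simp add: degree_Ep coeff_Ep)
  qed
  moreover have "n0 \<noteq> 0"
  proof
    assume "n0 = 0"
    then obtain a where "R0 = [:a:]" using R0(2) by (metis degree_eq_zeroE)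
    then show False using R0 by (simp add: ci_const)
  qed
  moreover have "degree (Ep p) = n0 + degree (primitive_part q)"
  proof -
    have "coeff (Ep p) (p - 1) = 1" using p1 by (simp add: coeff_Ep)
    then have "Ep p \<noteq> 0" by auto
    then have "primitive_part q \<noteq> 0" "smult (sgn c) (primitive_part R0) \<noteq> 0" using E by auto
    then show ?thesis using E dF by (simp add: degree_mult_eq)
  qed
  ultimately show False using degree_Ep[OF p1] n0le R(2) dF by auto
qed

lemma om_pow_p: "p > 0 \<Longrightarrow> omega p ^ p = 1"
  by (simp add: omega_def DeMoivre)

lemma om_ne1: assumes "p > 1" shows "omega p \<noteq> 1"
proof
  assume h: "omega p = 1"
  have "inj_on (\<lambda>k. cis (2 * pi * real k / real p)) {..<p}"
    using bij_betw_roots_unity[of p] assms by (auto simp: bij_betw_def)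
  moreover have "cis (2 * pi * real 1 / real p) = cis (2 * pi * real 0 / real p)"
    using h by (simp add: omega_def)
  ultimately show False using assms by (auto dest: inj_onD[of _ _ 1 0])
qed

lemma om_mod: assumes "p > 0" shows "omega p ^ n = omega p ^ (n mod p)"
proof -
  have "omega p ^ n = omega p ^ (p * (n div p) + n mod p)" by simp
  also have "\<dots> = (omega p ^ p) ^ (n div p) * omega p ^ (n mod p)"
    by (simp only: power_add power_mult)
  finally show ?thesis using om_pow_p[OF assms] by simp
qed

lemma om_cong: "p > 0 \<Longrightarrow> n mod p = m mod p \<Longrightarrow> omega p ^ n = omega p ^ m"
  by (metis om_mod)

lemma om_norm: "cnj (omega p ^ n) * omega p ^ n = 1"
proof -
  have "norm (omega p ^ n) = 1" by (simp add: omega_def norm_power)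
  then show ?thesis by (metis complex_norm_square mult.commute of_real_1 power_one)
qed

lemma om_ne0: "omega p \<noteq> 0"
  by (simp add: omega_def)

lemma ci_sum: "ci (sum f A) = (\<Sum>x\<in>A. ci (f x))"
  by (induction A rule: infinite_finite_induct) (auto simp: ci_add)

lemma sums_eq:
  assumes p: "prime p" and A: "A \<subseteq> {1..<p}" and B: "B \<subseteq> {1..<p}"
    and eq: "(\<Sum>j\<in>A. omega p ^ j) = (\<Sum>j\<in>B. omega p ^ j)"
  shows "A = B"
proof (rule ccontr)
  assume AB: "A \<noteq> B"
  have p1: "p > 1" using p prime_gt_1_nat by auto
  define c where "c k = (if Suc k \<in> A then 1 else 0) - (if Suc k \<in> B then 1 else (0::int))" for k
  define Q where "Q = (\<Sum>k<p-1. monom (c k) k)"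
  have cQ: "coeff Q k = (if k < p - 1 then c k else 0)" for k
    by (simp add: Q_def coeff_sum coeff_monom)
  obtain j where j: "j \<in> A \<and> j \<notin> B \<or> j \<in> B \<and> j \<notin> A" using AB by blast
  then have j1: "j \<ge> 1" "j < p" using A B by auto
  have "coeff Q (j - 1) \<noteq> 0" using j j1 by (auto simp: cQ c_def)
  then have Q0: "Q \<noteq> 0" by auto
  have dQ: "degree Q < p - 1"
  proof -
    have "degree Q \<le> p - 2" by (rule degree_le) (auto simp: cQ)
    then show ?thesis using p1 by linarith
  qed
  have "omega p * poly (ci Q) (omega p) = (\<Sum>k<p-1. of_int (c k) * omega p ^ Suc k)"
    by (simp add: Q_def ci_sum poly_sum map_poly_monom poly_monom sum_distrib_left mult_ac)
  also have "\<dots> = (\<Sum>j\<in>{1..<p}. of_int (c (j - 1)) * omega p ^ j)"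
  proof -
    have "Suc ` {..<p-1} = {1..<p}"
    proof
      show "Suc ` {..<p-1} \<subseteq> {1..<p}" by auto
      show "{1..<p} \<subseteq> Suc ` {..<p-1}"
      proof
        fix x assume "x \<in> {1..<p}"
        then have "x = Suc (x - 1)" "x - 1 \<in> {..<p-1}" by auto
        then show "x \<in> Suc ` {..<p-1}" by (rule image_eqI)
      qed
    qed
    then have "(\<Sum>j\<in>{1..<p}. of_int (c (j - 1)) * omega p ^ j) = (\<Sum>j\<in>Suc ` {..<p-1}. of_int (c (j - 1)) * omega p ^ j)"
      by simp
    also have "\<dots> = (\<Sum>k<p-1. of_int (c k) * omega p ^ Suc k)"
      by (subst sum.reindex) auto
    finally show ?thesis by simp
  qed
  also have "\<dots> = (\<Sum>j\<in>{1..<p}. (if j \<in> A then omega p ^ j else 0) - (if j \<in> B then omega p ^ j else 0))"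
    by (intro sum.cong) (auto simp: c_def)
  also have "\<dots> = (\<Sum>j\<in>A. omega p ^ j) - (\<Sum>j\<in>B. omega p ^ j)"
    using A B by (simp add: sum_subtractf sum.inter_restrict[symmetric] Int_absorb1 Int_absorb2 inf.absorb2)
  also have "\<dots> = 0" using eq by simp
  finally have "poly (ci Q) (omega p) = 0" using om_ne0 by simp
  define R where "R = pcompose Q [:1, 1:]"
  have "poly (ci R) (omega p - 1) = poly (ci Q) (omega p)"
  proof -
    have "ci [:1, 1:] = [:1, 1:]"
      by (simp add: poly_eq_iff coeff_map_poly coeff_pCons split: nat.split)
    then show ?thesis unfolding R_def poly_ci_pcompose by simp
  qed
  moreover have "R \<noteq> 0" unfolding R_def using Q0 pcompose_eq_0[of Q "[:1,1:]"] by auto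
  moreover have "degree R < p - 1" unfolding R_def using dQ by (simp add: degree_pcompose)
  ultimately show False
    using no_small_root[OF p om_pow_p om_ne1] p1 \<open>poly (ci Q) (omega p) = 0\<close> by auto
qed

definition mulset :: "nat \<Rightarrow> nat \<Rightarrow> nat set \<Rightarrow> nat set" where
  "mulset p a X = (\<lambda>x. a * x mod p) ` X"

lemma unit_coprime: fixes p a :: nat assumes "prime p" "0 < a" "a < p" shows "coprime a p"
proof -
  have "\<not> p dvd a"
  proof
    assume "p dvd a" then have "p \<le> a" using assms(2) by (rule dvd_imp_le)
    then show False using assms(3) by simp
  qed
  then have "coprime p a" by (rule prime_imp_coprime[OF assms(1)])
  then show ?thesis by (simp only: coprime_commute)
qed

lemma unit_inverse:
  fixes p a :: nat
  assumes "prime p" "0 < a" "a < p"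
  shows "\<exists>b. 0 < b \<and> b < p \<and> a * b mod p = 1"
proof -
  have p1: "p > 1" using prime_gt_1_nat[OF assms(1)] .
  obtain x where x: "[a * x = Suc 0] (mod p)" using cong_solve_coprime_nat[OF unit_coprime[OF assms]] by blast
  define b where "b = x mod p"
  have "a * b mod p = a * x mod p" unfolding b_def by (rule mod_mult_right_eq)
  also have "\<dots> = 1" using x p1 by (simp add: cong_def)
  finally have e: "a * b mod p = 1" .
  have "b \<noteq> 0" proof assume "b = 0" then show False using e by simp qed
  moreover have "b < p" using p1 unfolding b_def by (intro mod_less_divisor) simp
  ultimately show ?thesis using e by auto
qed

lemma mul_inj:
  fixes p a x y :: nat
  assumes "prime p" "0 < a" "a < p" "x < p" "y < p" "a * x mod p = a * y mod p"
  shows "x = y"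
proof -
  have "[a * x = a * y] (mod p)" using assms by (simp add: cong_def)
  then have "[x = y] (mod p)" using cong_mult_lcancel_nat unit_coprime[OF assms(1-3)] by blast
  then show ?thesis using assms by (simp add: cong_def)
qed

lemma mul_inj_on: "prime (p::nat) \<Longrightarrow> 0 < a \<Longrightarrow> a < p \<Longrightarrow> X \<subseteq> {..<p} \<Longrightarrow> inj_on (\<lambda>x. a * x mod p) X"
  by (intro inj_onI) (rule mul_inj, auto)

lemma mul_zero_iff:
  fixes p a x :: nat
  assumes "prime p" "0 < a" "a < p" "x < p"
  shows "a * x mod p = 0 \<longleftrightarrow> x = 0"
  using mul_inj[OF assms(1-3) assms(4), of 0] assms by auto

lemma mulset_sub: "(p::nat) > 0 \<Longrightarrow> mulset p a X \<subseteq> {..<p}"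
  by (auto simp: mulset_def)

lemma card_mulset: "prime (p::nat) \<Longrightarrow> 0 < a \<Longrightarrow> a < p \<Longrightarrow> X \<subseteq> {..<p} \<Longrightarrow> card (mulset p a X) = card X"
  unfolding mulset_def by (rule card_image) (rule mul_inj_on)

lemma zero_mulset:
  assumes "prime p" "0 < a" "a < p" "X \<subseteq> {..<(p::nat)}"
  shows "0 \<in> mulset p a X \<longleftrightarrow> 0 \<in> X"
proof -
  have h: "(a * x mod p = 0) = (x = 0)" if "x \<in> X" for x
  proof -
    have "x < p" using that assms(4) by auto
    then show ?thesis by (rule mul_zero_iff[OF assms(1-3)])
  qed
  have "0 \<in> mulset p a X \<longleftrightarrow> (\<exists>x\<in>X. 0 = a * x mod p)" unfolding mulset_def by (rule image_iff)
  also have "\<dots> \<longleftrightarrow> 0 \<in> X" using h by metis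
  finally show ?thesis .
qed

lemma mulset_mulset: "mulset (p::nat) a (mulset p b X) = mulset p (a * b mod p) X"
  unfolding mulset_def image_image by (intro image_cong refl) (simp add: mod_mult_right_eq mod_mult_left_eq mult.assoc)

lemma mulset_1:
  assumes "X \<subseteq> {..<(p::nat)}" shows "mulset p 1 X = X"
proof -
  have "(\<lambda>x. 1 * x mod p) ` X = (\<lambda>x. x) ` X" by (rule image_cong) (use assms in auto)
  then show ?thesis by (simp add: mulset_def)
qed

lemma mulset_inv: "X \<subseteq> {..<(p::nat)} \<Longrightarrow> b * a mod p = 1 \<Longrightarrow> mulset p b (mulset p a X) = X"
  using mulset_1[of X p] by (simp add: mulset_mulset)

lemma sum_sorted:
  assumes "finite J"
  shows "(\<Sum>i<card J. f (sorted_list_of_set J ! i)) = (\<Sum>j\<in>J. f j)"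
proof -
  have "bij_betw ((!) (sorted_list_of_set J)) {..<card J} J"
    by (rule bij_betw_nth) (use assms in auto)
  then show ?thesis by (rule sum.reindex_bij_betw)
qed

lemma inner_pres:
  assumes U: "unitary_mat d U"
  shows "(\<Sum>i<d. (\<Sum>a<d. U i a * w a) * cnj (\<Sum>b<d. U i b * w' b)) = (\<Sum>a<d. w a * cnj (w' a))"
proof -
  have "(\<Sum>i<d. (\<Sum>a<d. U i a * w a) * cnj (\<Sum>b<d. U i b * w' b))
      = (\<Sum>i<d. \<Sum>a<d. \<Sum>b<d. (w a * cnj (w' b)) * (U i a * cnj (U i b)))"
  proof (intro sum.cong refl)
    fix i
    have "(\<Sum>a<d. U i a * w a) * cnj (\<Sum>b<d. U i b * w' b) = (\<Sum>a<d. U i a * w a) * (\<Sum>b<d. cnj (U i b) * cnj (w' b))"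
      by (simp add: cnj_sum)
    also have "\<dots> = (\<Sum>a<d. \<Sum>b<d. (U i a * w a) * (cnj (U i b) * cnj (w' b)))"
      by (rule sum_product)
    also have "\<dots> = (\<Sum>a<d. \<Sum>b<d. (w a * cnj (w' b)) * (U i a * cnj (U i b)))"
      by (intro sum.cong refl) (simp add: mult_ac)
    finally show "(\<Sum>a<d. U i a * w a) * cnj (\<Sum>b<d. U i b * w' b) = (\<Sum>a<d. \<Sum>b<d. (w a * cnj (w' b)) * (U i a * cnj (U i b)))" .
  qed
  also have "\<dots> = (\<Sum>a<d. \<Sum>i<d. \<Sum>b<d. (w a * cnj (w' b)) * (U i a * cnj (U i b)))"
    by (rule sum.swap)
  also have "\<dots> = (\<Sum>a<d. \<Sum>b<d. \<Sum>i<d. (w a * cnj (w' b)) * (U i a * cnj (U i b)))"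
    by (rule sum.cong[OF refl]) (rule sum.swap)
  also have "\<dots> = (\<Sum>a<d. \<Sum>b<d. (w a * cnj (w' b)) * (if a = b then 1 else 0))"
  proof (intro sum.cong refl)
    fix a b assume ab: "a \<in> {..<d}" "b \<in> {..<d}"
    have "(\<Sum>i<d. U i a * cnj (U i b)) = cnj (\<Sum>i<d. cnj (U i a) * U i b)"
      by (simp add: cnj_sum mult.commute)
    also have "\<dots> = (if a = b then 1 else 0)" using U ab unfolding unitary_mat_def by auto
    finally show "(\<Sum>i<d. w a * cnj (w' b) * (U i a * cnj (U i b))) = w a * cnj (w' b) * (if a = b then 1 else 0)"
      by (simp add: sum_distrib_left[symmetric])
  qed
  also have "\<dots> = (\<Sum>a<d. w a * cnj (w' a))"
    by (simp add: if_distrib cong: if_cong)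
  finally show ?thesis .
qed

lemma harm_inner:
  assumes "finite J" "d = card J"
  shows "(\<Sum>i<d. harm_frame p J k i * cnj (harm_frame p J l i)) = (\<Sum>j\<in>J. omega p ^ (j * k) * cnj (omega p ^ (j * l)))"
  unfolding harm_frame_def assms(2) by (rule sum_sorted[OF assms(1)])

lemma sums_eq0:
  assumes p: "prime p" and A: "A \<subseteq> {..<p}" and B: "B \<subseteq> {..<p}" and z: "0 \<in> A \<longleftrightarrow> 0 \<in> B"
    and eq: "(\<Sum>j\<in>A. omega p ^ j) = (\<Sum>j\<in>B. omega p ^ j)"
  shows "A = B"
proof -
  have fA: "finite A" and fB: "finite B" using A B finite_subset by auto
  have sA: "(\<Sum>j\<in>A. omega p ^ j) = (if 0 \<in> A then 1 else 0) + (\<Sum>j\<in>A - {0}. omega p ^ j)"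
    using fA by (cases "0 \<in> A") (auto simp: sum.remove)
  have sB: "(\<Sum>j\<in>B. omega p ^ j) = (if 0 \<in> B then 1 else 0) + (\<Sum>j\<in>B - {0}. omega p ^ j)"
    using fB by (cases "0 \<in> B") (auto simp: sum.remove)
  have "(\<Sum>j\<in>A - {0}. omega p ^ j) = (\<Sum>j\<in>B - {0}. omega p ^ j)"
    using eq sA sB z by simp
  moreover have "A - {0} \<subseteq> {1..<p}" "B - {0} \<subseteq> {1..<p}" using A B by auto
  ultimately have "A - {0} = B - {0}" using sums_eq[OF p] by blast
  then show ?thesis using z by blast
qed

lemma equiv_imp:
  assumes p: "prime p" and J: "J \<subseteq> {..<p}" and K: "K \<subseteq> {..<p}"
    and cJ: "card J = d" and cK: "card K = d" and z: "0 \<in> J \<longleftrightarrow> 0 \<in> K"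
    and eqv: "unit_equiv d {..<p} (harm_frame p J) {..<p} (harm_frame p K)"
  shows "\<exists>m. 0 < m \<and> m < p \<and> J = mulset p m K"
proof -
  have p1: "p > 1" using prime_gt_1_nat[OF p] .
  have fJ: "finite J" and fK: "finite K" using J K finite_subset by auto
  obtain U \<sigma> where U: "unitary_mat d U" and s: "bij_betw \<sigma> {..<p} {..<p}"
    and e: "\<forall>k\<in>{..<p}. \<forall>i<d. harm_frame p J k i = (\<Sum>l<d. U i l * harm_frame p K (\<sigma> k) l)"
    using eqv unfolding unit_equiv_def by blast
  have "(\<Sum>j\<in>J. omega p ^ j) = (\<Sum>j\<in>J. omega p ^ (j * 1) * cnj (omega p ^ (j * 0)))" by simp
  also have "\<dots> = (\<Sum>i<d. harm_frame p J 1 i * cnj (harm_frame p J 0 i))"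
    by (rule harm_inner[symmetric]) (use fJ cJ in auto)
  also have "\<dots> = (\<Sum>i<d. (\<Sum>l<d. U i l * harm_frame p K (\<sigma> 1) l) * cnj (\<Sum>l<d. U i l * harm_frame p K (\<sigma> 0) l))"
    using e p1 by auto
  also have "\<dots> = (\<Sum>l<d. harm_frame p K (\<sigma> 1) l * cnj (harm_frame p K (\<sigma> 0) l))"
    by (rule inner_pres[OF U])
  also have "\<dots> = (\<Sum>j\<in>K. omega p ^ (j * \<sigma> 1) * cnj (omega p ^ (j * \<sigma> 0)))"
    by (rule harm_inner) (use fK cK in auto)
  finally have eq1: "(\<Sum>j\<in>J. omega p ^ j) = (\<Sum>j\<in>K. omega p ^ (j * \<sigma> 1) * cnj (omega p ^ (j * \<sigma> 0)))" .
  have s0: "\<sigma> 0 < p" and s1: "\<sigma> 1 < p" using s p1 by (auto simp: bij_betw_def)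
  have sne: "\<sigma> 1 \<noteq> \<sigma> 0" using s p1 by (auto simp: bij_betw_def dest: inj_onD[of _ _ 1 0])
  define m where "m = (\<sigma> 1 + p - \<sigma> 0) mod p"
  have mc: "(m + \<sigma> 0) mod p = \<sigma> 1"
  proof -
    have "(m + \<sigma> 0) mod p = (\<sigma> 1 + p - \<sigma> 0 + \<sigma> 0) mod p" unfolding m_def by (simp add: mod_add_left_eq)
    also have "\<sigma> 1 + p - \<sigma> 0 + \<sigma> 0 = \<sigma> 1 + p" using s0 by simp
    finally show ?thesis using s1 by simp
  qed
  have m0: "m \<noteq> 0"
  proof
    assume "m = 0" then have "\<sigma> 0 mod p = \<sigma> 1" using mc by simp
    then show False using s0 sne by simp
  qed
  have mp: "m < p" unfolding m_def using p1 by simp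
  have tm: "omega p ^ (j * \<sigma> 1) * cnj (omega p ^ (j * \<sigma> 0)) = omega p ^ (m * j mod p)" for j
  proof -
    have "omega p ^ (m * j) * omega p ^ (j * \<sigma> 0) = omega p ^ (j * (m + \<sigma> 0))"
    proof -
      have "j * (m + \<sigma> 0) = m * j + j * \<sigma> 0" by (simp add: algebra_simps)
      then show ?thesis by (simp only: power_add)
    qed
    also have "\<dots> = omega p ^ (j * \<sigma> 1)"
    proof (rule om_cong)
      show "p > 0" using p1 by simp
      have "j * (m + \<sigma> 0) mod p = j * ((m + \<sigma> 0) mod p) mod p" by (rule mod_mult_right_eq[symmetric])
      then show "j * (m + \<sigma> 0) mod p = j * \<sigma> 1 mod p" using mc by simp
    qed
    finally have "omega p ^ (m * j) * omega p ^ (j * \<sigma> 0) = omega p ^ (j * \<sigma> 1)" .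
    then have "omega p ^ (j * \<sigma> 1) * cnj (omega p ^ (j * \<sigma> 0)) = omega p ^ (m * j) * (omega p ^ (j * \<sigma> 0) * cnj (omega p ^ (j * \<sigma> 0)))"
      by (simp add: mult.assoc)
    also have "\<dots> = omega p ^ (m * j)" using om_norm[of p "j * \<sigma> 0"] by (simp add: mult.commute)
    also have "\<dots> = omega p ^ (m * j mod p)" by (rule om_mod) (use p1 in simp)
    finally show ?thesis .
  qed
  have "(\<Sum>j\<in>J. omega p ^ j) = (\<Sum>j\<in>K. omega p ^ (m * j mod p))" using eq1 tm by simp
  also have "\<dots> = (\<Sum>x\<in>mulset p m K. omega p ^ x)"
    unfolding mulset_def by (subst sum.reindex) (use mul_inj_on[OF p _ mp K] m0 in auto)
  finally have eq2: "(\<Sum>j\<in>J. omega p ^ j) = (\<Sum>x\<in>mulset p m K. omega p ^ x)" .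
  have "J = mulset p m K"
  proof (rule sums_eq0[OF p J _ _ eq2])
    show "mulset p m K \<subseteq> {..<p}" using mulset_sub p1 by simp
    show "0 \<in> J \<longleftrightarrow> 0 \<in> mulset p m K" using z zero_mulset[OF p _ mp K] m0 by simp
  qed
  then show ?thesis using m0 mp by auto
qed

lemma modcalc:
  fixes a b x k p :: nat
  assumes "a * b mod p = 1"
  shows "((a * x mod p) * (b * k mod p)) mod p = (x * k) mod p"
proof -
  have "((a * x mod p) * (b * k mod p)) mod p = ((a * x) * (b * k)) mod p" by (simp add: mod_mult_eq)
  also have "(a * x) * (b * k) = (a * b) * (x * k)" by (simp add: mult_ac)
  also have "((a * b) * (x * k)) mod p = ((a * b mod p) * (x * k)) mod p" by (simp add: mod_mult_left_eq)
  also have "\<dots> = (x * k) mod p" using assms by simp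
  finally show ?thesis .
qed

lemma equiv_of_mul:
  assumes p: "prime p" and J: "J \<subseteq> {..<p}" and a: "0 < a" "a < p" and d: "d = card J"
  shows "unit_equiv d {..<p} (harm_frame p J) {..<p} (harm_frame p (mulset p a J))"
proof -
  define K where "K = mulset p a J"
  have p1: "p > 1" using prime_gt_1_nat[OF p] .
  have fJ: "finite J" using J finite_subset by auto
  obtain b where b: "0 < b" "b < p" "a * b mod p = 1" using unit_inverse[OF p a] by blast
  have cK: "card K = d" unfolding K_def d using card_mulset[OF p a J] .
  have fK: "finite K" unfolding K_def mulset_def using fJ by simp
  define sJ where "sJ = sorted_list_of_set J"
  define sK where "sK = sorted_list_of_set K"
  have nJ: "bij_betw ((!) sJ) {..<d} J" unfolding sJ_def d by (rule bij_betw_nth) (use fJ in auto)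
  have nK: "bij_betw ((!) sK) {..<d} K" unfolding sK_def cK[symmetric] by (rule bij_betw_nth) (use fK in auto)
  have mJ: "bij_betw (\<lambda>x. a * x mod p) J K"
    unfolding K_def mulset_def by (rule bij_betw_imageI[OF mul_inj_on[OF p a J] refl])
  define \<tau> where "\<tau> = inv_into {..<d} ((!) sK) \<circ> ((\<lambda>x. a * x mod p) \<circ> ((!) sJ))"
  have t: "bij_betw \<tau> {..<d} {..<d}"
    unfolding \<tau>_def by (rule bij_betw_trans[OF bij_betw_trans[OF nJ mJ] bij_betw_inv_into[OF nK]])
  have tp: "sK ! (\<tau> i) = a * (sJ ! i) mod p" if "i < d" for i
  proof -
    have "a * (sJ ! i) mod p \<in> K" using nJ mJ that by (auto simp: bij_betw_def)
    then have "a * (sJ ! i) mod p \<in> (!) sK ` {..<d}" using nK by (simp add: bij_betw_def)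
    then show ?thesis unfolding \<tau>_def by (simp add: f_inv_into_f)
  qed
  have tlt: "\<tau> i < d" if "i < d" for i using t that by (auto simp: bij_betw_def)
  define U where "U i l = (if l = \<tau> i then 1 else (0::complex))" for i l
  define \<sigma> where "\<sigma> k = b * k mod p" for k
  have sb: "bij_betw \<sigma> {..<p} {..<p}"
  proof -
    have inj: "inj_on \<sigma> {..<p}" unfolding \<sigma>_def by (rule mul_inj_on[OF p b(1,2)]) simp
    have "\<sigma> ` {..<p} = {..<p}" by (rule endo_inj_surj) (use inj p1 in \<open>auto simp: \<sigma>_def\<close>)
    then show ?thesis using inj by (simp add: bij_betw_def)
  qed
  have uni: "unitary_mat d U"
    unfolding unitary_mat_def
  proof (intro allI impI)
    fix i l assume il: "i < d" "l < d"
    have "(\<Sum>m<d. cnj (U m i) * U m l) = (\<Sum>m<d. if \<tau> m = i \<and> \<tau> m = l then 1 else 0)"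
      by (intro sum.cong refl) (auto simp: U_def)
    also have "\<dots> = (\<Sum>y<d. if y = i \<and> y = l then 1 else 0)"
      using sum.reindex_bij_betw[OF t, of "\<lambda>y. if y = i \<and> y = l then (1::complex) else 0"] by simp
    also have "\<dots> = (if i = l then 1 else 0)"
    proof (cases "i = l")
      case True then show ?thesis using il by (simp add: sum.delta)
    next
      case False then have "(\<Sum>y<d. if y = i \<and> y = l then 1 else (0::complex)) = (\<Sum>y<d. 0)"
        by (intro sum.cong refl) auto
      then show ?thesis using False by simp
    qed
    finally show "(\<Sum>m<d. cnj (U m i) * U m l) = (if i = l then 1 else 0)" .
  qed
  have fr: "\<forall>k\<in>{..<p}. \<forall>i<d. harm_frame p J k i = (\<Sum>l<d. U i l * harm_frame p K (\<sigma> k) l)"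
  proof (intro ballI allI impI)
    fix k i assume k: "k \<in> {..<p}" and i: "i < d"
    have "(\<Sum>l<d. U i l * harm_frame p K (\<sigma> k) l) = (\<Sum>l<d. if l = \<tau> i then harm_frame p K (\<sigma> k) l else 0)"
      by (intro sum.cong refl) (simp add: U_def)
    also have "\<dots> = harm_frame p K (\<sigma> k) (\<tau> i)" using tlt[OF i] by (simp add: sum.delta')
    also have "\<dots> = omega p ^ ((a * (sJ ! i) mod p) * (b * k mod p))"
      unfolding harm_frame_def sK_def[symmetric] tp[OF i] \<sigma>_def ..
    also have "\<dots> = omega p ^ (sJ ! i * k)"
      by (rule om_cong) (use p1 modcalc[OF b(3)] in auto)
    also have "\<dots> = harm_frame p J k i" unfolding harm_frame_def sJ_def ..
    finally show "harm_frame p J k i = (\<Sum>l<d. U i l * harm_frame p K (\<sigma> k) l)" ..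
  qed
  show ?thesis unfolding unit_equiv_def K_def[symmetric] using uni sb fr by blast
qed

lemma equiv_iff:
  assumes p: "prime p" and J: "J \<subseteq> {..<p}" and K: "K \<subseteq> {..<p}"
    and cJ: "card J = d" and cK: "card K = d" and z: "0 \<in> J \<longleftrightarrow> 0 \<in> K"
  shows "unit_equiv d {..<p} (harm_frame p J) {..<p} (harm_frame p K) \<longleftrightarrow> (\<exists>a. 0 < a \<and> a < p \<and> K = mulset p a J)"
proof
  assume "unit_equiv d {..<p} (harm_frame p J) {..<p} (harm_frame p K)"
  then obtain m where m: "0 < m" "m < p" "J = mulset p m K" using equiv_imp[OF assms] by blast
  obtain b where b: "0 < b" "b < p" "m * b mod p = 1" using unit_inverse[OF p m(1,2)] by blast
  have "mulset p b J = K" using m(3) mulset_inv[OF K, of b m] b(3) by (simp add: mult.commute)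
  then show "\<exists>a. 0 < a \<and> a < p \<and> K = mulset p a J" using b by auto
next
  assume "\<exists>a. 0 < a \<and> a < p \<and> K = mulset p a J"
  then obtain a where "0 < a" "a < p" "K = mulset p a J" by blast
  then show "unit_equiv d {..<p} (harm_frame p J) {..<p} (harm_frame p K)"
    using equiv_of_mul[OF p J, of a d] cJ by simp
qed

lemma gen_count:
  assumes fA: "finite A" and eq: "equiv A r" and cls: "\<forall>x\<in>A. card (r``{x}) = j" and j: "j > 0"
  shows "card {X. X \<subseteq> A \<and> (\<forall>x\<in>X. r``{x} \<subseteq> X) \<and> card X = d}
         = (if j dvd d then (card A div j) choose (d div j) else 0)"
proof -
  define P where "P = A // r"
  define T where "T = {X. X \<subseteq> A \<and> (\<forall>x\<in>X. r``{x} \<subseteq> X) \<and> card X = d}"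
  have fP: "finite P" unfolding P_def using fA by (rule finite_quotient) (rule equiv_type[OF eq])
  have UP: "\<Union>P = A" unfolding P_def using eq by (rule Union_quotient)
  have disj: "B \<inter> B' = {}" if "B \<in> P" "B' \<in> P" "B \<noteq> B'" for B B'
    using quotient_disj[OF eq] that unfolding P_def by blast
  have cB: "card B = j" if "B \<in> P" for B
    using that cls unfolding P_def quotient_def by auto
  have fB: "finite B" if "B \<in> P" for B using that UP fA by (meson Union_upper finite_subset)
  have cU: "card (\<Union>Q) = j * card Q" if "Q \<subseteq> P" for Q
  proof -
    have "card (\<Union>Q) = (\<Sum>B\<in>Q. card B)"
    proof (rule card_Union_disjoint)
      show "pairwise disjnt Q" unfolding pairwise_def disjnt_def using that disj by blast
      show "\<And>B. B \<in> Q \<Longrightarrow> finite B" using that fB by blast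
    qed
    also have "\<dots> = (\<Sum>B\<in>Q. j)" using that cB by (intro sum.cong) auto
    finally show ?thesis by simp
  qed
  have cA: "card A = j * card P" using cU[of P] UP by simp
  define F where "F X = {B\<in>P. B \<subseteq> X}" for X
  have key: "\<Union>(F X) = X" if "X \<in> T" for X
  proof
    show "\<Union>(F X) \<subseteq> X" unfolding F_def by auto
    show "X \<subseteq> \<Union>(F X)"
    proof
      fix x assume x: "x \<in> X"
      then have xA: "x \<in> A" using that T_def by auto
      have "r``{x} \<in> P" unfolding P_def using xA by (rule quotientI)
      moreover have "r``{x} \<subseteq> X" using that x T_def by auto
      moreover have "x \<in> r``{x}" using eq xA by (meson equiv_class_self)
      ultimately show "x \<in> \<Union>(F X)" unfolding F_def by blast
    qed
  qed
  have cT: "card X = j * card (F X)" if "X \<in> T" for X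
    using cU[of "F X"] key[OF that] by (simp add: F_def)
  show ?thesis
  proof (cases "j dvd d")
    case False
    have "T = {}"
    proof (rule ccontr)
      assume "T \<noteq> {}" then obtain X where "X \<in> T" by blast
      then have "card X = d" unfolding T_def by simp
      then have "d = j * card (F X)" using cT[OF \<open>X \<in> T\<close>] by simp
      then show False using False by simp
    qed
    then have "{X. X \<subseteq> A \<and> (\<forall>x\<in>X. r``{x} \<subseteq> X) \<and> card X = d} = {}" unfolding T_def .
    then show ?thesis using False by (simp only: card.empty if_False)
  next
    case True
    define m where "m = d div j"
    have dm: "d = j * m" using True m_def by simp
    have "bij_betw F T {Q. Q \<subseteq> P \<and> card Q = m}"
    proof (rule bij_betw_byWitness[where f' = Union])
      show "\<forall>X\<in>T. \<Union>(F X) = X" using key by blast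
      show "\<forall>Q\<in>{Q. Q \<subseteq> P \<and> card Q = m}. F (\<Union>Q) = Q"
      proof
        fix Q assume Q: "Q \<in> {Q. Q \<subseteq> P \<and> card Q = m}"
        show "F (\<Union>Q) = Q"
        proof
          show "Q \<subseteq> F (\<Union>Q)" using Q unfolding F_def by auto
          show "F (\<Union>Q) \<subseteq> Q"
          proof
            fix B assume B: "B \<in> F (\<Union>Q)"
            then have BP: "B \<in> P" and BU: "B \<subseteq> \<Union>Q" unfolding F_def by auto
            have "B \<noteq> {}" using BP unfolding P_def by (meson eq in_quotient_imp_non_empty)
            then obtain x where "x \<in> B" by blast
            then obtain B' where "B' \<in> Q" "x \<in> B'" using BU by blast
            then have "B = B'" using disj[OF BP, of B'] Q \<open>x \<in> B\<close> by blast
            then show "B \<in> Q" using \<open>B' \<in> Q\<close> by simp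
          qed
        qed
      qed
      show "F ` T \<subseteq> {Q. Q \<subseteq> P \<and> card Q = m}"
      proof
        fix Q assume "Q \<in> F ` T"
        then obtain X where X: "X \<in> T" "Q = F X" by blast
        have "card X = d" using X T_def by auto
        then have "card Q = m" using cT[OF X(1)] X(2) dm j by simp
        moreover have "Q \<subseteq> P" using X unfolding F_def by auto
        ultimately show "Q \<in> {Q. Q \<subseteq> P \<and> card Q = m}" by simp
      qed
      show "Union ` {Q. Q \<subseteq> P \<and> card Q = m} \<subseteq> T"
      proof
        fix X assume "X \<in> Union ` {Q. Q \<subseteq> P \<and> card Q = m}"
        then obtain Q where Q: "Q \<subseteq> P" "card Q = m" "X = \<Union>Q" by blast
        have "X \<subseteq> A" using Q UP by auto
        moreover have "card X = d" using cU[OF Q(1)] Q dm by simp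
        moreover have "\<forall>x\<in>X. r``{x} \<subseteq> X"
        proof
          fix x assume "x \<in> X"
          then obtain B where B: "B \<in> Q" "x \<in> B" using Q by blast
          then have "B \<in> P" using Q by auto
          then obtain y where y: "y \<in> A" "B = r``{y}" unfolding P_def quotient_def by blast
          then have "(y, x) \<in> r" using B by simp
          then have "r``{x} = r``{y}" using equiv_class_eq[OF eq] by metis
          then show "r``{x} \<subseteq> X" using y B Q by auto
        qed
        ultimately show "X \<in> T" unfolding T_def by blast
      qed
    qed
    then have "card T = card {Q. Q \<subseteq> P \<and> card Q = m}" by (rule bij_betw_same_card)
    also have "\<dots> = card P choose m" using fP by (rule n_subsets)
    also have "card P = card A div j" using cA j by simp
    finally show ?thesis using True m_def T_def by simp
  qed
qed

context
  fixes p a :: nat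
  assumes p: "prime p" and a: "0 < a" "a < p"
begin

definition "Ar = {1..<p}"
definition "rr = {(x, y). x \<in> Ar \<and> y \<in> Ar \<and> (\<exists>i. y = a ^ i * x mod p)}"

lemma p1: "p > 1" using prime_gt_1_nat[OF p] .

lemma cop: "coprime p a"
  using unit_coprime[OF p a] by (simp only: coprime_commute)

lemma ordpos: "ord p a > 0" using cop ord_eq_0[of p a] by simp

lemma apow: "a ^ ord p a mod p = 1"
  using ord_works[of a p] p1 by (simp add: cong_def)

lemma pow_mod_ord: "a ^ i * x mod p = a ^ (i mod ord p a) * x mod p"
proof -
  define j where "j = ord p a"
  have "a ^ i = (a ^ j) ^ (i div j) * a ^ (i mod j)"
    by (simp add: power_mult[symmetric] power_add[symmetric])
  then have "a ^ i * x mod p = ((a ^ j) ^ (i div j) * (a ^ (i mod j) * x)) mod p" by (simp add: mult.assoc)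
  also have "\<dots> = (((a ^ j) ^ (i div j)) mod p * (a ^ (i mod j) * x)) mod p" by (rule mod_mult_left_eq[symmetric])
  also have "((a ^ j) ^ (i div j)) mod p = ((a ^ j mod p) ^ (i div j)) mod p" by (rule power_mod[symmetric])
  also have "\<dots> = 1" using apow p1 j_def by simp
  finally show ?thesis using j_def by simp
qed

lemma unitA: "x \<in> Ar \<Longrightarrow> a ^ i * x mod p \<in> Ar"
proof -
  assume x: "x \<in> Ar"
  have "\<not> p dvd a" using a by (meson dvd_imp_le not_le)
  then have na: "\<not> p dvd a ^ i" using p prime_dvd_power by blast
  have "\<not> p dvd x" using x unfolding Ar_def by (auto dest: dvd_imp_le)
  then have "\<not> p dvd a ^ i * x" using na p by (simp add: prime_dvd_mult_iff)
  then have "a ^ i * x mod p \<noteq> 0" by (simp add: dvd_eq_mod_eq_0)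
  moreover have "a ^ i * x mod p < p" using p1 by simp
  ultimately show ?thesis unfolding Ar_def by auto
qed

lemma mod_id: "x \<in> Ar \<Longrightarrow> x mod p = x" unfolding Ar_def by simp

lemma equiv_rr: "equiv Ar rr"
proof (rule equivI)
  show "rr \<subseteq> Ar \<times> Ar" unfolding rr_def by auto
  show "refl_on Ar rr" unfolding refl_on_def rr_def
  proof safe
    fix x assume "x \<in> Ar"
    then show "\<exists>i. x = a ^ i * x mod p" by (intro exI[of _ 0]) (simp add: mod_id)
  qed
  show "sym rr" unfolding sym_def rr_def
  proof safe
    fix x i assume x: "x \<in> Ar" and y: "a ^ i * x mod p \<in> Ar"
    define j where "j = ord p a"
    have "a ^ (i * (j - 1)) * (a ^ i * x mod p) mod p = a ^ (i * (j - 1)) * (a ^ i * x) mod p"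
      by (rule mod_mult_right_eq)
    also have "a ^ (i * (j - 1)) * (a ^ i * x) = a ^ (j * i) * x"
    proof -
      have "j > 0" using ordpos j_def by simp
      then have "i * (j - 1) + i = j * i" by (cases j) (auto simp: algebra_simps)
      then show ?thesis by (metis mult.assoc power_add)
    qed
    also have "a ^ (j * i) * x mod p = a ^ ((j * i) mod j) * x mod p" unfolding j_def by (rule pow_mod_ord)
    also have "\<dots> = x" using mod_id[OF x] by simp
    finally show "\<exists>ia. x = a ^ ia * (a ^ i * x mod p) mod p" by metis
  qed
  show "trans rr" unfolding trans_def rr_def
  proof safe
    fix x i k assume "x \<in> Ar"
    have "a ^ k * (a ^ i * x mod p) mod p = a ^ k * (a ^ i * x) mod p" by (rule mod_mult_right_eq)
    also have "\<dots> = a ^ (k + i) * x mod p" by (simp add: power_add mult.assoc)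
    finally show "\<exists>ia. a ^ k * (a ^ i * x mod p) mod p = a ^ ia * x mod p" by metis
  qed
qed

lemma class_rr: assumes x: "x \<in> Ar" shows "rr``{x} = (\<lambda>i. a ^ i * x mod p) ` {..<ord p a}"
proof
  show "rr``{x} \<subseteq> (\<lambda>i. a ^ i * x mod p) ` {..<ord p a}"
  proof
    fix y assume "y \<in> rr``{x}"
    then obtain i where "y = a ^ i * x mod p" unfolding rr_def by auto
    then have "y = a ^ (i mod ord p a) * x mod p" using pow_mod_ord by simp
    moreover have "i mod ord p a < ord p a" using ordpos by simp
    ultimately show "y \<in> (\<lambda>i. a ^ i * x mod p) ` {..<ord p a}" by blast
  qed
  show "(\<lambda>i. a ^ i * x mod p) ` {..<ord p a} \<subseteq> rr``{x}"
    using x unitA unfolding rr_def by auto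
qed

lemma card_class: assumes x: "x \<in> Ar" shows "card (rr``{x}) = ord p a"
proof -
  have cx: "coprime x p"
  proof -
    have "0 < x" "x < p" using x unfolding Ar_def by auto
    then show ?thesis using unit_coprime[OF p] by blast
  qed
  have "inj_on (\<lambda>i. a ^ i * x mod p) {..<ord p a}"
  proof (rule inj_onI)
    fix i k assume ik: "i \<in> {..<ord p a}" "k \<in> {..<ord p a}" and e: "a ^ i * x mod p = a ^ k * x mod p"
    have "[a ^ i * x = a ^ k * x] (mod p)" using e by (simp add: cong_def)
    then have "[a ^ i = a ^ k] (mod p)" using cong_mult_rcancel_nat[OF cx] by blast
    then have "a ^ i mod p = a ^ k mod p" by (simp add: cong_def)
    then show "i = k" by (rule inj_onD[OF inj_power_mod[OF cop]]) (use ik in auto)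
  qed
  then show ?thesis unfolding class_rr[OF x] by (simp add: card_image)
qed

lemma fixed_iff:
  assumes X: "X \<subseteq> Ar"
  shows "mulset p a X = X \<longleftrightarrow> (\<forall>x\<in>X. rr``{x} \<subseteq> X)"
proof
  assume m: "mulset p a X = X"
  have pw: "a ^ i * x mod p \<in> X" if "x \<in> X" for i x
  proof (induction i)
    case 0
    have "x \<in> Ar" using that X by blast
    then show ?case using that by (simp add: mod_id)
  next
    case (Suc i)
    have "a ^ Suc i * x mod p = a * (a ^ i * x mod p) mod p"
      by (simp add: mod_mult_right_eq mult.assoc)
    also have "\<dots> \<in> mulset p a X" using Suc unfolding mulset_def by blast
    finally show ?case using m by simp
  qed
  show "\<forall>x\<in>X. rr``{x} \<subseteq> X"
  proof (intro ballI subsetI)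
    fix x y assume "x \<in> X" "y \<in> rr``{x}"
    then obtain i where "y = a ^ i * x mod p" unfolding rr_def by auto
    then show "y \<in> X" using pw \<open>x \<in> X\<close> by simp
  qed
next
  assume cl: "\<forall>x\<in>X. rr``{x} \<subseteq> X"
  have sub: "mulset p a X \<subseteq> X"
  proof
    fix y assume "y \<in> mulset p a X"
    then obtain x where x: "x \<in> X" "y = a * x mod p" unfolding mulset_def by blast
    have xA: "x \<in> Ar" using x X by blast
    have "y = a ^ 1 * x mod p" using x by simp
    moreover have "y \<in> Ar" using unitA[OF xA, of 1] x by simp
    ultimately have "(x, y) \<in> rr" using xA unfolding rr_def by fast
    then show "y \<in> X" using cl x by blast
  qed
  have XP: "X \<subseteq> {..<p}" by (rule subset_trans[OF X]) (auto simp: Ar_def)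
  have "finite X" by (rule finite_subset[OF X]) (simp add: Ar_def)
  show "mulset p a X = X" by (rule card_subset_eq[OF \<open>finite X\<close> sub]) (rule card_mulset[OF p a XP])
qed

lemma fix_count:
  "card {X. X \<subseteq> {..<p} \<and> card X = d \<and> 0 \<notin> X \<and> mulset p a X = X}
   = (if ord p a dvd d then ((p - 1) div ord p a) choose (d div ord p a) else 0)"
proof -
  have "{X. X \<subseteq> {..<p} \<and> card X = d \<and> 0 \<notin> X \<and> mulset p a X = X}
      = {X. X \<subseteq> Ar \<and> (\<forall>x\<in>X. rr``{x} \<subseteq> X) \<and> card X = d}"
  proof (intro Collect_cong iffI)
    fix X assume h: "X \<subseteq> {..<p} \<and> card X = d \<and> 0 \<notin> X \<and> mulset p a X = X"
    from h have h1: "X \<subseteq> {..<p}" by (rule conjunct1)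
    from h have h2: "card X = d" by (rule conjunct1[OF conjunct2])
    from h have h3: "0 \<notin> X" by (rule conjunct1[OF conjunct2[OF conjunct2]])
    from h have h4: "mulset p a X = X" by (rule conjunct2[OF conjunct2[OF conjunct2]])
    have "X \<subseteq> Ar"
    proof
      fix x assume x: "x \<in> X"
      have "x < p" using h1 x by auto
      moreover have "x \<noteq> 0" proof assume "x = 0" then show False using h3 x by simp qed
      ultimately
      show "x \<in> Ar" unfolding Ar_def by simp
    qed
    moreover from this have "mulset p a X = X \<longleftrightarrow> (\<forall>x\<in>X. rr``{x} \<subseteq> X)" by (rule fixed_iff)
    ultimately show "X \<subseteq> Ar \<and> (\<forall>x\<in>X. rr``{x} \<subseteq> X) \<and> card X = d" using h2 h4 by simp
  next
    fix X assume h: "X \<subseteq> Ar \<and> (\<forall>x\<in>X. rr``{x} \<subseteq> X) \<and> card X = d"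
    then have XA: "X \<subseteq> Ar" by blast
    then have "X \<subseteq> {..<p}" "0 \<notin> X" unfolding Ar_def by auto
    moreover have "mulset p a X = X \<longleftrightarrow> (\<forall>x\<in>X. rr``{x} \<subseteq> X)" using XA by (rule fixed_iff)
    ultimately show "X \<subseteq> {..<p} \<and> card X = d \<and> 0 \<notin> X \<and> mulset p a X = X" using h by simp
  qed
  also have "card \<dots> = (if ord p a dvd d then (card Ar div ord p a) choose (d div ord p a) else 0)"
  proof (rule gen_count[OF _ equiv_rr _ ordpos])
    show "finite Ar" unfolding Ar_def by simp
    show "\<forall>x\<in>Ar. card (rr``{x}) = ord p a" using card_class by blast
  qed
  also have "card Ar = p - 1" unfolding Ar_def by simp
  finally show ?thesis .
qed

end

definition Gp :: "nat \<Rightarrow> nat monoid" where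
  "Gp p = \<lparr>carrier = {1..<p}, mult = (\<lambda>a b. a * b mod p), one = 1\<rparr>"

lemma group_Gp:
  assumes p: "prime p" shows "group (Gp p)"
proof (rule groupI)
  have p1: "p > 1" using prime_gt_1_nat[OF p] .
  show "\<one>\<^bsub>Gp p\<^esub> \<in> carrier (Gp p)" using p1 by (simp add: Gp_def)
  fix x y z
  assume x: "x \<in> carrier (Gp p)"
  then have x': "0 < x" "x < p" by (auto simp: Gp_def)
  show "\<one>\<^bsub>Gp p\<^esub> \<otimes>\<^bsub>Gp p\<^esub> x = x" using x' by (simp add: Gp_def)
  show "\<exists>y\<in>carrier (Gp p). y \<otimes>\<^bsub>Gp p\<^esub> x = \<one>\<^bsub>Gp p\<^esub>"
  proof -
    obtain b where b: "0 < b" "b < p" "x * b mod p = 1" using unit_inverse[OF p x'] by blast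
    then show ?thesis by (auto simp: Gp_def mult.commute intro!: bexI[of _ b])
  qed
  assume y: "y \<in> carrier (Gp p)"
  then have y': "0 < y" "y < p" by (auto simp: Gp_def)
  show "x \<otimes>\<^bsub>Gp p\<^esub> y \<in> carrier (Gp p)"
  proof -
    have "x * y mod p \<noteq> 0" using mul_zero_iff[OF p x' y'(2)] y' by simp
    moreover have "x * y mod p < p" using p1 by simp
    ultimately show ?thesis by (simp add: Gp_def)
  qed
  assume z: "z \<in> carrier (Gp p)"
  show "x \<otimes>\<^bsub>Gp p\<^esub> y \<otimes>\<^bsub>Gp p\<^esub> z = x \<otimes>\<^bsub>Gp p\<^esub> (y \<otimes>\<^bsub>Gp p\<^esub> z)"
  proof -
    have "(x * y mod p) * z mod p = x * y * z mod p" by (rule mod_mult_left_eq)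
    also have "\<dots> = x * (y * z) mod p" by (simp add: mult.assoc)
    also have "\<dots> = x * (y * z mod p) mod p" by (rule mod_mult_right_eq[symmetric])
    finally show ?thesis by (simp add: Gp_def)
  qed
qed

definition act :: "nat \<Rightarrow> nat set set \<Rightarrow> nat \<Rightarrow> nat set \<Rightarrow> nat set" where
  "act p E a = (\<lambda>X\<in>E. mulset p a X)"

lemma action:
  assumes p: "prime p" and sub: "\<forall>X\<in>E. X \<subseteq> {..<p}"
    and cl: "\<forall>a\<in>{1..<p}. \<forall>X\<in>E. mulset p a X \<in> E"
  shows "group_action (Gp p) E (act p E)"
  unfolding group_action_def group_hom_def group_hom_axioms_def hom_def
proof (intro conjI group_Gp[OF p] group_BijGroup CollectI ballI Pi_I)
  have inBij: "act p E a \<in> Bij E" if a: "a \<in> {1..<p}" for a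
  proof -
    have a0: "0 < a" "a < p" using a by auto
    obtain b where b: "0 < b" "b < p" "a * b mod p = 1" using unit_inverse[OF p a0] by blast
    have ba: "b * a mod p = 1" using b(3) by (simp only: mult.commute)
    have b1: "b \<in> {1..<p}" using b by simp
    have inv: "act p E y (act p E x X) = X" if X: "X \<in> E" and xy: "y * x mod p = 1" and x: "x \<in> {1..<p}" for x y X
    proof -
      have "mulset p x X \<in> E" using cl x X by blast
      then have "act p E y (act p E x X) = mulset p y (mulset p x X)" using X by (simp add: act_def)
      also have "\<dots> = X" by (rule mulset_inv[OF _ xy]) (use sub X in blast)
      finally show ?thesis .
    qed
    have "bij_betw (act p E a) E E"
    proof (rule bij_betw_byWitness[where f' = "act p E b"])
      show "\<forall>X\<in>E. act p E b (act p E a X) = X" using inv ba a by blast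
      show "\<forall>X\<in>E. act p E a (act p E b X) = X" using inv b(3) b1 by blast
      show "act p E a ` E \<subseteq> E" using cl a by (auto simp: act_def)
      show "act p E b ` E \<subseteq> E" using cl b by (auto simp: act_def)
    qed
    then show ?thesis unfolding Bij_def act_def by auto
  qed
  fix a assume a: "a \<in> carrier (Gp p)"
  then show "act p E a \<in> carrier (BijGroup E)" using inBij by (simp add: Gp_def BijGroup_def)
  fix b assume b: "b \<in> carrier (Gp p)"
  have a': "a \<in> {1..<p}" and b': "b \<in> {1..<p}" using a b by (auto simp: Gp_def)
  have "act p E (a * b mod p) = compose E (act p E a) (act p E b)"
  proof (rule ext)
    fix X show "act p E (a * b mod p) X = compose E (act p E a) (act p E b) X"
      using cl b' by (auto simp: act_def compose_def mulset_mulset)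
  qed
  then show "act p E (a \<otimes>\<^bsub>Gp p\<^esub> b) = act p E a \<otimes>\<^bsub>BijGroup E\<^esub> act p E b"
    using inBij[OF a'] inBij[OF b'] by (simp add: Gp_def BijGroup_def)
qed

lemma classes_burnside:
  assumes p: "prime p" and fE: "finite E"
    and sub: "\<forall>X\<in>E. X \<subseteq> {..<p} \<and> card X = d"
    and z: "\<forall>X\<in>E. \<forall>Y\<in>E. (0 \<in> X \<longleftrightarrow> 0 \<in> Y)"
    and cl: "\<forall>a\<in>{1..<p}. \<forall>X\<in>E. mulset p a X \<in> E"
  shows "num_classes p d E * (p - 1) = (\<Sum>a\<in>{1..<p}. card {X\<in>E. mulset p a X = X})"
proof -
  define R where "R = {(J, K). J \<in> E \<and> K \<in> E \<and> unit_equiv d {..<p} (harm_frame p J) {..<p} (harm_frame p K)}"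
  have sub1: "\<forall>X\<in>E. X \<subseteq> {..<p}" using sub by blast
  have GA: "group_action (Gp p) E (act p E)" by (rule action[OF p sub1 cl])
  have cls: "R``{J} = orbit (Gp p) (act p E) J" if J: "J \<in> E" for J
  proof -
    have "R``{J} = {K\<in>E. \<exists>a. 0 < a \<and> a < p \<and> K = mulset p a J}"
    proof -
      have hK: "K \<in> R``{J} \<longleftrightarrow> K \<in> E \<and> (\<exists>a. 0 < a \<and> a < p \<and> K = mulset p a J)" for K
      proof (cases "K \<in> E")
        case True
        have "unit_equiv d {..<p} (harm_frame p J) {..<p} (harm_frame p K) \<longleftrightarrow> (\<exists>a. 0 < a \<and> a < p \<and> K = mulset p a J)"
        proof (rule equiv_iff[OF p])
          show "J \<subseteq> {..<p}" "card J = d" using J sub by blast+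
          show "K \<subseteq> {..<p}" "card K = d" using True sub by blast+
          show "0 \<in> J \<longleftrightarrow> 0 \<in> K" using z J True by blast
        qed
        moreover have "K \<in> R``{J} \<longleftrightarrow> unit_equiv d {..<p} (harm_frame p J) {..<p} (harm_frame p K)"
          using J True unfolding R_def by simp
        ultimately show ?thesis using True by simp
      next
        case False then show ?thesis unfolding R_def by simp
      qed
      show ?thesis
      proof (rule Set.set_eqI)
        fix K show "K \<in> R``{J} \<longleftrightarrow> K \<in> {K\<in>E. \<exists>a. 0 < a \<and> a < p \<and> K = mulset p a J}"
          using hK[of K] by simp
      qed
    qed
    also have "\<dots> = orbit (Gp p) (act p E) J"
      unfolding orbit_def using J cl by (auto simp: Gp_def act_def Suc_le_eq)
    finally show ?thesis .
  qed
  have "E // R = orbits (Gp p) E (act p E)"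
    unfolding quotient_def orbits_def using cls by auto
  then have "num_classes p d E = card (orbits (Gp p) E (act p E))"
    unfolding num_classes_def R_def by simp
  moreover have "card (orbits (Gp p) E (act p E)) * Coset.order (Gp p) = (\<Sum>g\<in>carrier (Gp p). card (invariants E (act p E) g))"
    by (rule group_action.burnside[OF GA]) (use fE in \<open>auto simp: Gp_def\<close>)
  moreover have "Coset.order (Gp p) = p - 1" by (simp add: Coset.order_def Gp_def)
  moreover have "invariants E (act p E) g = {X\<in>E. mulset p g X = X}" for g
    by (auto simp: invariants_def act_def)
  ultimately show ?thesis by (simp add: Gp_def)
qed

lemma sum_ord:
  fixes F :: "nat \<Rightarrow> nat"
  assumes p: "prime p"
  shows "(\<Sum>a\<in>{1..<p}. F (ord p a)) = (\<Sum>j | j dvd p - 1. totient j * F j)"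
proof -
  have p1: "p > 1" using prime_gt_1_nat[OF p] .
  have fin: "finite {j. j dvd p - 1}" by (rule finite_divisors_nat) (use p1 in simp)
  have img: "(\<lambda>a. ord p a) ` {1..<p} \<subseteq> {j. j dvd p - 1}"
  proof
    fix j assume "j \<in> (\<lambda>a. ord p a) ` {1..<p}"
    then obtain a where a: "a \<in> {1..<p}" "j = ord p a" by blast
    have "\<not> p dvd a" using a by (auto dest: dvd_imp_le)
    then have "[a ^ (p - 1) = 1] (mod p)" by (rule fermat_theorem[OF p])
    then show "j \<in> {j. j dvd p - 1}" using a ord_divides'[of a "p - 1" p] by simp
  qed
  have "(\<Sum>a\<in>{1..<p}. F (ord p a)) = (\<Sum>j\<in>{j. j dvd p - 1}. \<Sum>a\<in>{a \<in> {1..<p}. ord p a = j}. F (ord p a))"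
    by (rule sum.group[OF _ fin img, symmetric]) simp
  also have "\<dots> = (\<Sum>j\<in>{j. j dvd p - 1}. totient j * F j)"
  proof (rule sum.cong[OF refl])
    fix j assume j: "j \<in> {j. j dvd p - 1}"
    have "(\<Sum>a\<in>{a \<in> {1..<p}. ord p a = j}. F (ord p a)) = (\<Sum>a\<in>{a \<in> {1..<p}. ord p a = j}. F j)"
      by (rule sum.cong) auto
    also have "\<dots> = card {a \<in> {1..<p}. ord p a = j} * F j" by simp
    also have "card {a \<in> {1..<p}. ord p a = j} = totient j"
    proof -
      have "{a \<in> {1..<p}. ord p a = j} = {x \<in> totatives p. ord p x = j}"
        using totatives_prime[OF p] by auto
      then show ?thesis using prime_card_elements_with_ord_eq_totient[OF p1 p, of j] j by simp
    qed
    finally show "(\<Sum>a\<in>{a \<in> {1..<p}. ord p a = j}. F (ord p a)) = totient j * F j" .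
  qed
  finally show ?thesis .
qed

lemma formula:
  assumes p: "prime p"
    and N: "N * (p - 1) = (\<Sum>a\<in>{1..<p}. (if ord p a dvd e then ((p - 1) div ord p a) choose (e div ord p a) else 0))"
  shows "real N = (\<Sum>j | j dvd gcd (p - 1) e. real (((p - 1) div j) choose (e div j)) * real (totient j)) / real (p - 1)"
proof -
  have p1: "p > 1" using prime_gt_1_nat[OF p] .
  have fin: "finite {j. j dvd p - 1}" by (rule finite_divisors_nat) (use p1 in simp)
  define C where "C j = ((p - 1) div j) choose (e div j)" for j
  have "N * (p - 1) = (\<Sum>j | j dvd p - 1. totient j * (if j dvd e then C j else 0))"
    unfolding C_def using N sum_ord[OF p, of "\<lambda>j. if j dvd e then ((p - 1) div j) choose (e div j) else 0"] by simp
  also have "\<dots> = (\<Sum>j | j dvd p - 1. if j dvd e then C j * totient j else 0)"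
    by (rule sum.cong) auto
  also have "\<dots> = (\<Sum>j\<in>{j \<in> {j. j dvd p - 1}. j dvd e}. C j * totient j)"
    by (rule sum.inter_filter[OF fin, symmetric])
  also have "{j \<in> {j. j dvd p - 1}. j dvd e} = {j. j dvd gcd (p - 1) e}" by auto
  finally have e: "N * (p - 1) = (\<Sum>j | j dvd gcd (p - 1) e. C j * totient j)" .
  have "real N * real (p - 1) = (\<Sum>j | j dvd gcd (p - 1) e. real (C j) * real (totient j))"
    using arg_cong[OF e, of real] by simp
  then show ?thesis using p1 by (simp add: C_def field_simps)
qed

lemma unlifted_count:
  assumes p: "prime p"
  shows "num_classes p d (unlifted_sets p d) * (p - 1) =
     (\<Sum>a\<in>{1..<p}. (if ord p a dvd d then ((p - 1) div ord p a) choose (d div ord p a) else 0))"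
proof -
  have p1: "p > 1" using prime_gt_1_nat[OF p] .
  have fE: "finite (unlifted_sets p d)"
    by (rule finite_subset[of _ "Pow {..<p}"]) (auto simp: unlifted_sets_def)
  have "num_classes p d (unlifted_sets p d) * (p - 1) = (\<Sum>a\<in>{1..<p}. card {X\<in>unlifted_sets p d. mulset p a X = X})"
  proof (rule classes_burnside[OF p fE])
    show "\<forall>X\<in>unlifted_sets p d. X \<subseteq> {..<p} \<and> card X = d" by (simp add: unlifted_sets_def)
    show "\<forall>X\<in>unlifted_sets p d. \<forall>Y\<in>unlifted_sets p d. (0 \<in> X) = (0 \<in> Y)" by (simp add: unlifted_sets_def)
    show "\<forall>a\<in>{1..<p}. \<forall>X\<in>unlifted_sets p d. mulset p a X \<in> unlifted_sets p d"
    proof (intro ballI)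
      fix a X assume a: "a \<in> {1..<p}" and X: "X \<in> unlifted_sets p d"
      have a0: "0 < a" "a < p" using a by auto
      have XS: "X \<subseteq> {..<p}" using X by (simp add: unlifted_sets_def)
      show "mulset p a X \<in> unlifted_sets p d"
        using X mulset_sub[of p a X] p1 card_mulset[OF p a0 XS] zero_mulset[OF p a0 XS]
        by (simp add: unlifted_sets_def)
    qed
  qed
  also have "\<dots> = (\<Sum>a\<in>{1..<p}. (if ord p a dvd d then ((p - 1) div ord p a) choose (d div ord p a) else 0))"
  proof (rule sum.cong[OF refl])
    fix a assume a: "a \<in> {1..<p}"
    have a0: "0 < a" "a < p" using a by auto
    have "{X\<in>unlifted_sets p d. mulset p a X = X} = {X. X \<subseteq> {..<p} \<and> card X = d \<and> 0 \<notin> X \<and> mulset p a X = X}"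
      by (simp add: unlifted_sets_def conj_assoc)
    then show "card {X\<in>unlifted_sets p d. mulset p a X = X} = (if ord p a dvd d then ((p - 1) div ord p a) choose (d div ord p a) else 0)"
      using fix_count[OF p a0, of d] by simp
  qed
  finally show ?thesis .
qed

lemma lifted_count:
  assumes p: "prime p" and d: "d \<ge> 1"
  shows "num_classes p d (lifted_sets p d) * (p - 1) =
     (\<Sum>a\<in>{1..<p}. (if ord p a dvd (d - 1) then ((p - 1) div ord p a) choose ((d - 1) div ord p a) else 0))"
proof -
  have p1: "p > 1" using prime_gt_1_nat[OF p] .
  have fE: "finite (lifted_sets p d)"
    by (rule finite_subset[of _ "Pow {..<p}"]) (auto simp: lifted_sets_def)
  have "num_classes p d (lifted_sets p d) * (p - 1) = (\<Sum>a\<in>{1..<p}. card {X\<in>lifted_sets p d. mulset p a X = X})"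
  proof (rule classes_burnside[OF p fE])
    show "\<forall>X\<in>lifted_sets p d. X \<subseteq> {..<p} \<and> card X = d" by (simp add: lifted_sets_def)
    show "\<forall>X\<in>lifted_sets p d. \<forall>Y\<in>lifted_sets p d. (0 \<in> X) = (0 \<in> Y)" by (simp add: lifted_sets_def)
    show "\<forall>a\<in>{1..<p}. \<forall>X\<in>lifted_sets p d. mulset p a X \<in> lifted_sets p d"
    proof (intro ballI)
      fix a X assume a: "a \<in> {1..<p}" and X: "X \<in> lifted_sets p d"
      have a0: "0 < a" "a < p" using a by auto
      have XS: "X \<subseteq> {..<p}" using X by (simp add: lifted_sets_def)
      show "mulset p a X \<in> lifted_sets p d"
        using X mulset_sub[of p a X] p1 card_mulset[OF p a0 XS] zero_mulset[OF p a0 XS]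
        by (simp add: lifted_sets_def)
    qed
  qed
  also have "\<dots> = (\<Sum>a\<in>{1..<p}. (if ord p a dvd (d - 1) then ((p - 1) div ord p a) choose ((d - 1) div ord p a) else 0))"
  proof (rule sum.cong[OF refl])
    fix a assume a: "a \<in> {1..<p}"
    have a0: "0 < a" "a < p" using a by auto
    define T where "T = {X. X \<subseteq> {..<p} \<and> card X = d - 1 \<and> 0 \<notin> X \<and> mulset p a X = X}"
    have "bij_betw (insert 0) T {X\<in>lifted_sets p d. mulset p a X = X}"
    proof (rule bij_betw_byWitness[where f' = "\<lambda>X. X - {0}"])
      show "\<forall>Y\<in>T. insert 0 Y - {0} = Y" unfolding T_def by auto
      show "\<forall>X\<in>{X\<in>lifted_sets p d. mulset p a X = X}. insert 0 (X - {0}) = X"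
        unfolding lifted_sets_def by auto
      show "insert 0 ` T \<subseteq> {X\<in>lifted_sets p d. mulset p a X = X}"
      proof
        fix X assume "X \<in> insert 0 ` T"
        then obtain Y where Y: "Y \<in> T" "X = insert 0 Y" by blast
        have Y1: "Y \<subseteq> {..<p}" and Y2: "card Y = d - 1" and Y3: "0 \<notin> Y" and Y4: "mulset p a Y = Y"
          using Y(1) unfolding T_def by blast+
        have fY: "finite Y" using Y1 finite_subset by blast
        have "mulset p a X = insert (a * 0 mod p) (mulset p a Y)" unfolding Y(2) mulset_def by simp
        also have "\<dots> = X" using Y4 Y(2) by simp
        finally have m: "mulset p a X = X" .
        have "card X = d" using Y(2) Y2 Y3 fY d by simp
        moreover have "X \<subseteq> {..<p}" using Y(2) Y1 p1 by auto
        moreover have "0 \<in> X" using Y(2) by simp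
        ultimately show "X \<in> {X\<in>lifted_sets p d. mulset p a X = X}" using m by (simp add: lifted_sets_def)
      qed
      show "(\<lambda>X. X - {0}) ` {X\<in>lifted_sets p d. mulset p a X = X} \<subseteq> T"
      proof
        fix Y assume "Y \<in> (\<lambda>X. X - {0}) ` {X\<in>lifted_sets p d. mulset p a X = X}"
        then obtain X where X: "X \<in> lifted_sets p d" "mulset p a X = X" "Y = X - {0}" by blast
        have X1: "X \<subseteq> {..<p}" and X2: "card X = d" and X3: "0 \<in> X"
          using X(1) unfolding lifted_sets_def by blast+
        have "mulset p a Y = mulset p a X - mulset p a {0}"
          unfolding X(3) mulset_def by (rule inj_on_image_set_diff[OF mul_inj_on[OF p a0 X1]]) (use X1 X3 in auto)
        also have "mulset p a {0} = {0}" by (simp add: mulset_def)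
        finally have "mulset p a Y = Y" using X(2,3) by simp
        moreover have "card Y = d - 1" using X(3) X2 X3 by simp
        moreover have "Y \<subseteq> {..<p}" "0 \<notin> Y" using X(3) X1 by auto
        ultimately show "Y \<in> T" unfolding T_def by blast
      qed
    qed
    then have "card {X\<in>lifted_sets p d. mulset p a X = X} = card T" by (simp add: bij_betw_same_card)
    also have "\<dots> = (if ord p a dvd (d - 1) then ((p - 1) div ord p a) choose ((d - 1) div ord p a) else 0)"
      unfolding T_def by (rule fix_count[OF p a0])
    finally show "card {X\<in>lifted_sets p d. mulset p a X = X} = (if ord p a dvd (d - 1) then ((p - 1) div ord p a) choose ((d - 1) div ord p a) else 0)" .
  qed
  finally show ?thesis .
qed

theorem theorem7p2:
  fixes p d :: nat
  assumes "prime p" and "d \<ge> 1"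
  shows "real (num_classes p d (unlifted_sets p d)) =
           (\<Sum>j | j dvd gcd (p - 1) d.
              real (((p - 1) div j) choose (d div j)) * real (totient j)) / real (p - 1) \<and>
         (d > 1 \<longrightarrow> real (num_classes p d (lifted_sets p d)) =
           (\<Sum>j | j dvd gcd (p - 1) (d - 1).
              real (((p - 1) div j) choose ((d - 1) div j)) * real (totient j)) / real (p - 1))"
proof
  show "real (num_classes p d (unlifted_sets p d)) =
           (\<Sum>j | j dvd gcd (p - 1) d.
              real (((p - 1) div j) choose (d div j)) * real (totient j)) / real (p - 1)"
    by (rule formula[OF assms(1) unlifted_count[OF assms(1)]])
  show "d > 1 \<longrightarrow> real (num_classes p d (lifted_sets p d)) =
           (\<Sum>j | j dvd gcd (p - 1) (d - 1).
              real (((p - 1) div j) choose ((d - 1) div j)) * real (totient j)) / real (p - 1)"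
    using formula[OF assms(1) lifted_count[OF assms]] by blast
qed

end
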